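(* Let $n\ge 3$ and let $A_1\ldots A_n$ be a regular $n$-gon in the coordinate plane. Let $f(x)$ be a real polynomial of degree $n$ whose roots, counted with multiplicity, are the abscissas of $A_1,\ldots,A_n$ (i.e. $f(x)=c\prod_{j=1}^n (x-x(A_j))$, $c\neq 0$). Then every root of $f$ has multiplicity at most $2$, $f'$ has $n-1$ distinct real roots, and if $l_1,\ldots,l_{n-1}$ are the vertical lines through these roots, then the leftmost and the rightmost of these lines are tangent to the circle inscribed in $A_1\ldots A_n$. Equivalently, if $O=(o,\cdot)$ is the center and $r$ the inradius of the polygon, then the smallest root of $f'$ is $o-r$ and the largest is $o+r$.
   Context: "Vertical" means parallel to the ordinate axis; $x(P)$ denotes the abscissa of a point $P$. *)

theory Defs
  imports Complex_Main "HOL-Computational_Algebra.Polynomial"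
begin

definition regular_polygon :: "nat \<Rightarrow> (nat \<Rightarrow> real \<times> real) \<Rightarrow> real \<times> real \<Rightarrow> real \<Rightarrow> bool" where
  "regular_polygon n A c R \<longleftrightarrow> R > 0 \<and>
     (\<exists>\<theta>::real. \<exists>s\<in>{-1, 1::real}. \<forall>j\<in>{1..n}.
        A j = (fst c + R * cos (\<theta> + s * 2 * pi * real j / real n),
               snd c + R * sin (\<theta> + s * 2 * pi * real j / real n)))"

definition inradius :: "nat \<Rightarrow> real \<Rightarrow> real" where
  "inradius n R = R * cos (pi / real n)"

end

theory Submission
  imports Defs
begin


lemma unity_prod:
  assumes n: "n > 0"
  shows "(\<Prod>k<n. (y::complex) - cis (2*pi*real k/real n)) = y^n - 1"
proof -
  let ?z = "\<lambda>k. cis (2*pi*real k/real n)"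
  define p where "p = (\<Prod>k<n. [:- ?z k, 1:])"
  define q where "q = (monom (1::complex) n - 1)"
  have bij: "bij_betw ?z {..<n} {z. z ^ n = 1}" by (rule bij_betw_roots_unity[OF n])
  have degp: "degree p = n" unfolding p_def
    by (subst degree_prod_sum_eq) auto
  have lcp: "lead_coeff p = 1" unfolding p_def lead_coeff_prod by simp
  have degq: "degree q \<le> n" unfolding q_def using n
    by (intro degree_diff_le) (auto intro: order.trans[OF degree_monom_le])
  have "p = q"
  proof (rule poly_eqI_degree_lead_coeff[where A="?z ` {..<n}" and n=n])
    show "poly.coeff p n = poly.coeff q n" using lcp degp n by (simp add: q_def coeff_monom)
    show "n \<le> card (?z ` {..<n})" using bij card_roots_unity_eq[OF n] by (simp add: bij_betw_def)
    show "degree p \<le> n" "degree q \<le> n" using degp degq by auto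
    fix z assume "z \<in> ?z ` {..<n}"
    then obtain k where k: "k < n" "z = ?z k" by auto
    have "poly p z = 0" unfolding p_def poly_prod using k
      by (intro prod_zero) auto
    moreover have "z ^ n = 1" using bij k unfolding bij_betw_def by auto
    ultimately show "poly p z = poly q z" by (simp add: q_def poly_monom)
  qed
  hence "poly p y = poly q y" by simp
  thus ?thesis by (simp add: p_def q_def poly_prod poly_monom)
qed



lemma shifted_prod:
  assumes n: "n > 0"
  shows "(\<Prod>k<n. (z::complex) - w * cis (2*pi*real k/real n)) = z^n - w^n"
proof (cases "w = 0")
  case True thus ?thesis using n by (simp add: power_0_left)
next
  case False
  have "(\<Prod>k<n. z - w * cis (2*pi*real k/real n)) = (\<Prod>k<n. w * (z/w - cis (2*pi*real k/real n)))"
    using False by (intro prod.cong) (auto simp: field_simps)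
  also have "\<dots> = w^n * (\<Prod>k<n. z/w - cis (2*pi*real k/real n))"
    by (simp add: prod.distrib)
  also have "\<dots> = w^n * ((z/w)^n - 1)" by (simp add: unity_prod[OF n])
  also have "\<dots> = z^n - w^n" using False by (simp add: field_simps power_divide)
  finally show ?thesis .
qed

lemma P_prod:
  assumes n: "n > 0" and s: "s \<in> {-1, 1::real}"
  shows "(\<Prod>j\<in>{1..n}. (z::complex) - cis (\<theta> + s * 2 * pi * real j / real n)) = z^n - cis \<theta> ^ n"
proof -
  let ?h = "\<lambda>k. z - cis \<theta> * cis (2*pi*real k/real n)"
  have "(\<Prod>j\<in>{1..n}. z - cis (\<theta> + s * 2 * pi * real j / real n)) = (\<Prod>k<n. ?h k)"
  proof (cases "s = 1")
    case True
    show ?thesis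
    proof (rule prod.reindex_bij_witness[of "{1..n}" "\<lambda>k. if k = 0 then n else k" "\<lambda>j. j mod n"])
      fix j assume j: "j \<in> {1..n}"
      show "(if j mod n = 0 then n else j mod n) = j" using j by (auto simp: le_less)
      show "j mod n \<in> {..<n}" using n by simp
      have "cis (2*pi*real (j mod n)/real n) = cis (2*pi*real j/real n)"
      proof (cases "j = n")
        case True
        have "cis (2*pi*real j/real n) = 1" using True n by (simp add: complex_eq_iff)
        thus ?thesis using True by simp
      next
        case False thus ?thesis using j by (simp add: le_less)
      qed
      thus "?h (j mod n) = z - cis (\<theta> + s * 2 * pi * real j / real n)"
        using True by (simp add: cis_mult mult_ac)
    next
      fix k assume k: "k \<in> {..<n}"
      show "(if k = 0 then n else k) mod n = k" using k by auto
      show "(if k = 0 then n else k) \<in> {1..n}" using k n by auto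
    qed
  next
    case False
    hence sm: "s = -1" using s by auto
    show ?thesis
    proof (rule prod.reindex_bij_witness[of "{1..n}" "\<lambda>k. n - k" "\<lambda>j. n - j"])
      fix j assume j: "j \<in> {1..n}"
      show "n - (n - j) = j" using j by auto
      show "n - j \<in> {..<n}" using j by auto
      have "2*pi*real (n - j)/real n = 2*pi + (- 2*pi*real j/real n)" using j n
        by (simp add: of_nat_diff field_simps)
      hence "cis (2*pi*real (n - j)/real n) = cis (- 2*pi*real j/real n)"
        by (simp add: cis_mult[symmetric] complex_eq_iff)
      thus "?h (n - j) = z - cis (\<theta> + s * 2 * pi * real j / real n)"
        using sm by (simp add: cis_mult)
    next
      fix k assume k: "k \<in> {..<n}"
      show "n - (n - k) = k" using k by auto
      show "n - k \<in> {1..n}" using k by auto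
    qed
  qed
  also have "\<dots> = z^n - cis \<theta> ^ n" by (rule shifted_prod[OF n])
  finally show ?thesis .
qed



lemma cos_diff_cis:
  "complex_of_real (cos a - cos b) = (cis a - cis b) * (cis a * cis b - 1) / (2 * cis a * cis b)"
proof -
  have ca: "complex_of_real (cos a) = (cis a + inverse (cis a)) / 2"
    by (simp add: complex_eq_iff cis.ctr)
  have cb: "complex_of_real (cos b) = (cis b + inverse (cis b)) / 2"
    by (simp add: complex_eq_iff cis.ctr)
  have nz: "cis a \<noteq> 0" "cis b \<noteq> 0" by auto
  show ?thesis unfolding of_real_diff ca cb using nz
    by (simp add: field_simps)
qed

lemma alg: "(Z::complex) \<noteq> 0 \<Longrightarrow> W \<noteq> 0 \<Longrightarrow> e \<noteq> 0 \<Longrightarrow>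
  (Z - W) * ((e*Z) * (inverse Z - W)) / ((2*q) * Z * (e * (0 - W))) = (Z-W)*(Z*W-1)/(2*Z*W)/q"
  by (cases "q = 0") (simp_all add: field_simps)

lemma trig_prod:
  assumes n: "n > 0" and s: "s \<in> {-1, 1::real}"
  shows "(\<Prod>j\<in>{1..n}. cos \<phi> - cos (\<theta> + s * 2 * pi * real j / real n))
          = (cos (real n * \<phi>) - cos (real n * \<theta>)) / 2^(n-1)"
proof -
  define z where "z = cis \<phi>"
  define w where "w = cis \<theta>"
  define u where "u = (\<lambda>j. cis (\<theta> + s * 2 * pi * real j / real n))"
  have P: "\<And>x. (\<Prod>j\<in>{1..n}. x - u j) = x^n - w^n" unfolding u_def w_def by (rule P_prod[OF n s])
  have zn: "z \<noteq> 0" "w \<noteq> 0" "\<And>j. u j \<noteq> 0" by (auto simp: z_def w_def u_def)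
  have "complex_of_real (\<Prod>j\<in>{1..n}. cos \<phi> - cos (\<theta> + s * 2 * pi * real j / real n))
      = (\<Prod>j\<in>{1..n}. (z - u j) * (z * u j - 1) / (2 * z * u j))"
    unfolding of_real_prod cos_diff_cis z_def u_def ..
  also have "\<dots> = (\<Prod>j\<in>{1..n}. z - u j) * (\<Prod>j\<in>{1..n}. z * u j - 1) / (2^n * z^n * (\<Prod>j\<in>{1..n}. u j))"
    by (simp add: prod.distrib prod_dividef)
  also have "(\<Prod>j\<in>{1..n}. z * u j - 1) = (\<Prod>j\<in>{1..n}. (-z) * (inverse z - u j))"
    using zn by (intro prod.cong) (auto simp: field_simps)
  also have "\<dots> = (-z)^n * (inverse z ^ n - w^n)" unfolding prod.distrib P by simp
  also have "(\<Prod>j\<in>{1..n}. u j) = (-1)^n * (\<Prod>j\<in>{1..n}. 0 - u j)"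
  proof -
    have "(\<Prod>j\<in>{1..n}. 0 - u j) = (\<Prod>j\<in>{1..n}. (-1) * u j)" by simp
    also have "\<dots> = (-1)^n * prod u {1..n}"
      by (simp only: prod.distrib prod_constant card_atLeastAtMost) simp
    finally have neg: "(\<Prod>j\<in>{1..n}. 0 - u j) = (-1)^n * prod u {1..n}" .
    have e: "(-1::complex)^n * (-1)^n = 1" by (simp add: power_mult_distrib[symmetric])
    show ?thesis unfolding neg mult.assoc[symmetric] e by simp
  qed
  also have "\<dots> = (-1)^n * (0^n - w^n)" by (simp only: P[of 0])
  finally have L0: "complex_of_real (\<Prod>j\<in>{1..n}. cos \<phi> - cos (\<theta> + s * 2 * pi * real j / real n))
     = (\<Prod>j\<in>{1..n}. z - u j) * ((-z)^n * (inverse z ^ n - w^n)) / (2^n * z^n * ((-1)^n * (0^n - w^n)))" .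
  have L: "complex_of_real (\<Prod>j\<in>{1..n}. cos \<phi> - cos (\<theta> + s * 2 * pi * real j / real n))
     = (z^n - w^n) * ((-z)^n * (inverse z ^ n - w^n)) / (2^n * z^n * ((-1)^n * (0^n - w^n)))"
    using L0 by (simp only: P)
  have R: "complex_of_real ((cos (real n * \<phi>) - cos (real n * \<theta>)) / 2^(n-1))
      = (z^n - w^n) * (z^n * w^n - 1) / (2 * z^n * w^n) / 2^(n-1)"
    unfolding of_real_divide cos_diff_cis z_def w_def by (simp add: DeMoivre)
  have pn: "(2::complex)^n = 2 * 2^(n-1)" using n by (cases n) auto
  have "(z^n - w^n) * ((-z)^n * (inverse z ^ n - w^n)) / (2^n * z^n * ((-1)^n * (0^n - w^n)))
      = (z^n - w^n) * (((-1)^n * z^n) * (inverse (z ^ n) - w^n)) / ((2 * 2^(n-1)) * z^n * ((-1)^n * (0 - w^n)))"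
    using n unfolding pn by (simp add: power_minus[of z] power_inverse power_0_left)
  also have "\<dots> = (z^n - w^n) * (z^n * w^n - 1) / (2 * z^n * w^n) / 2^(n-1)"
    by (rule alg) (use zn in auto)
  finally have "(z^n - w^n) * ((-z)^n * (inverse z ^ n - w^n)) / (2^n * z^n * ((-1)^n * (0^n - w^n)))
      = (z^n - w^n) * (z^n * w^n - 1) / (2 * z^n * w^n) / 2^(n-1)" .
  with L R have "complex_of_real (\<Prod>j\<in>{1..n}. cos \<phi> - cos (\<theta> + s * 2 * pi * real j / real n))
     = complex_of_real ((cos (real n * \<phi>) - cos (real n * \<theta>)) / 2^(n-1))" by simp
  thus ?thesis by (simp only: of_real_eq_iff)
qed



lemma simple_roots:
  fixes p :: "real poly"
  assumes p: "p \<noteq> 0" and c: "card {x. poly p x = 0} = degree p"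
  shows "order x p \<le> 1"
proof (rule ccontr)
  assume "\<not> order x p \<le> 1"
  hence "2 \<le> order x p" by simp
  hence "[:-x, 1:]^2 dvd p" using order_divides by blast
  then obtain q where q: "p = [:-x, 1:]^2 * q" by (auto simp: dvd_def)
  have q0: "q \<noteq> 0" using p q by auto
  have dp: "degree p = 2 + degree q" using q q0 by (simp add: degree_mult_eq degree_power_eq)
  have "card {x. poly p x = 0} \<le> card (insert x {x. poly q x = 0})"
    using poly_roots_finite[OF q0] by (intro card_mono) (auto simp: q)
  also have "\<dots> \<le> Suc (card {x. poly q x = 0})" by (rule card_insert_le_m1) auto
  also have "card {x. poly q x = 0} \<le> degree q" by (rule card_poly_roots_bound[OF q0])
  finally show False using c dp by simp
qed

lemma main:
  fixes n :: nat and A :: "nat \<Rightarrow> real \<times> real" and c :: "real \<times> real" and R a :: real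
    and f :: "real poly"
  assumes n3: "n \<ge> 3"
    and reg: "regular_polygon n A c R"
    and a0: "a \<noteq> 0"
    and fdef: "f = smult a (\<Prod>j=1..n. [:- fst (A j), 1:])"
  shows "(\<forall>x. order x f \<le> 2)
       \<and> card {x. poly (pderiv f) x = 0} = n - 1
       \<and> Min {x. poly (pderiv f) x = 0} = fst c - inradius n R
       \<and> Max {x. poly (pderiv f) x = 0} = fst c + inradius n R"
proof -
  have n: "n > 0" using n3 by simp
  obtain \<theta> s where R: "R > 0" and s: "s \<in> {-1, 1::real}"
    and Aj: "\<And>j. j \<in> {1..n} \<Longrightarrow> A j = (fst c + R * cos (\<theta> + s * 2 * pi * real j / real n),
               snd c + R * sin (\<theta> + s * 2 * pi * real j / real n))"
    using reg unfolding regular_polygon_def by blast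
  define c1 where "c1 = fst c"
  define K where "K = a * R^n / 2^(n-1)"
  have F1: "poly f (c1 + R * cos \<phi>) = K * (cos (real n * \<phi>) - cos (real n * \<theta>))" for \<phi>
  proof -
    have "poly f (c1 + R * cos \<phi>) = a * (\<Prod>j=1..n. R * (cos \<phi> - cos (\<theta> + s * 2 * pi * real j / real n)))"
      unfolding fdef poly_smult poly_prod
      by (intro arg_cong[where f="\<lambda>x. a * x"] prod.cong) (auto simp: Aj c1_def algebra_simps)
    also have "\<dots> = a * R^n * (\<Prod>j=1..n. cos \<phi> - cos (\<theta> + s * 2 * pi * real j / real n))"
      by (simp add: prod.distrib)
    also have "\<dots> = K * (cos (real n * \<phi>) - cos (real n * \<theta>))"
      unfolding trig_prod[OF n s] K_def by simp
    finally show ?thesis .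
  qed
  have F2: "poly (pderiv f) (c1 + R * cos (real k * pi / real n)) = 0" if k: "0 < k" "k < n" for k
  proof -
    define \<phi> where "\<phi> = real k * pi / real n"
    have D1: "DERIV (\<lambda>\<phi>. poly f (c1 + R * cos \<phi>)) \<phi> :> poly (pderiv f) (c1 + R * cos \<phi>) * (R * - sin \<phi>)"
      by (rule DERIV_chain2[OF poly_DERIV]) (auto intro!: derivative_eq_intros)
    have D2: "DERIV (\<lambda>\<phi>. poly f (c1 + R * cos \<phi>)) \<phi> :> K * (- sin (real n * \<phi>) * real n)"
      unfolding F1 by (auto intro!: derivative_eq_intros)
    have e: "poly (pderiv f) (c1 + R * cos \<phi>) * (R * - sin \<phi>) = K * (- sin (real n * \<phi>) * real n)"
      using DERIV_unique[OF D1 D2] .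
    have "real n * \<phi> = real k * pi" using n by (simp add: \<phi>_def)
    hence "sin (real n * \<phi>) = 0" by (simp add: sin_npi)
    moreover have "sin \<phi> > 0" unfolding \<phi>_def using k n
      by (intro sin_gt_zero) (auto simp: field_simps)
    ultimately have "poly (pderiv f) (c1 + R * cos \<phi>) * (R * sin \<phi>) = 0" using e by simp
    moreover have "R * sin \<phi> \<noteq> 0" using R \<open>sin \<phi> > 0\<close> by simp
    ultimately have "poly (pderiv f) (c1 + R * cos \<phi>) = 0" by simp
    thus ?thesis unfolding \<phi>_def .
  qed
  have degf: "degree f = n" unfolding fdef using a0
    by (simp add: degree_prod_sum_eq)
  have pd0: "pderiv f \<noteq> 0" using degf n by (simp add: pderiv_eq_0_iff)
  have degpd: "degree (pderiv f) = n - 1" using degf by (simp add: degree_pderiv)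
  define S where "S = (\<lambda>k. c1 + R * cos (real k * pi / real n)) ` {1..n-1}"
  have inj: "inj_on (\<lambda>k. c1 + R * cos (real k * pi / real n)) {1..n-1}"
  proof (rule inj_onI)
    fix k l assume k: "k \<in> {1..n-1}" and l: "l \<in> {1..n-1}"
      and e: "c1 + R * cos (real k * pi / real n) = c1 + R * cos (real l * pi / real n)"
    have ce: "cos (real k * pi / real n) = cos (real l * pi / real n)" using e R by simp
    have bds: "0 \<le> real k * pi / real n" "real k * pi / real n \<le> pi"
      "0 \<le> real l * pi / real n" "real l * pi / real n \<le> pi"
      using k l n by (auto simp: divide_simps)
    have "real k * pi / real n = real l * pi / real n"
      using bds ce by (rule cos_inj_pi)
    hence "real k = real l" using n by (simp add: divide_simps)
    thus "k = l" by simp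
  qed
  have cardS: "card S = n - 1" unfolding S_def using inj by (simp add: card_image)
  have fin: "finite {x. poly (pderiv f) x = 0}" by (rule poly_roots_finite[OF pd0])
  have sub: "S \<subseteq> {x. poly (pderiv f) x = 0}" unfolding S_def using F2 by auto
  have "card {x. poly (pderiv f) x = 0} \<le> n - 1"
    using card_poly_roots_bound[OF pd0] degpd by simp
  hence cardR: "card {x. poly (pderiv f) x = 0} = n - 1"
    using card_mono[OF fin sub] cardS by simp
  have SR: "S = {x. poly (pderiv f) x = 0}"
    using card_subset_eq[OF fin sub] cardS cardR by simp
  have finS: "finite S" unfolding S_def by simp
  have mono: "cos (real l * pi / real n) \<le> cos (real k * pi / real n)"
    if "k \<le> l" "l \<le> n" for k l
  proof (rule cos_monotone_0_pi_le)
    show "0 \<le> real k * pi / real n" by simp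
    show "real k * pi / real n \<le> real l * pi / real n" using that
      by (intro divide_right_mono mult_right_mono) auto
    show "real l * pi / real n \<le> pi" using that n by (simp add: divide_simps)
  qed
  have cosm: "cos (real (n-1) * pi / real n) = - cos (pi / real n)"
  proof -
    have "real (n-1) * pi / real n = pi - pi / real n" using n by (simp add: of_nat_diff divide_simps algebra_simps)
    thus ?thesis by simp
  qed
  have MinS: "Min S = c1 - R * cos (pi / real n)"
  proof (rule Min_eqI[OF finS])
    show "c1 - R * cos (pi / real n) \<in> S" unfolding S_def
    proof (rule image_eqI[where x="n-1"])
      show "c1 - R * cos (pi / real n) = c1 + R * cos (real (n-1) * pi / real n)"
        by (simp only: cosm)
      show "n-1 \<in> {1..n-1}" using n3 by simp
    qed
    fix y assume "y \<in> S"
    then obtain k where k: "k \<in> {1..n-1}" "y = c1 + R * cos (real k * pi / real n)" unfolding S_def by auto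
    have "cos (real (n-1) * pi / real n) \<le> cos (real k * pi / real n)" using k by (intro mono) auto
    hence "R * (- cos (pi / real n)) \<le> R * cos (real k * pi / real n)" using R cosm
      by (intro mult_left_mono) auto
    thus "c1 - R * cos (pi / real n) \<le> y" using k by simp
  qed
  have MaxS: "Max S = c1 + R * cos (pi / real n)"
  proof (rule Max_eqI[OF finS])
    show "c1 + R * cos (pi / real n) \<in> S" unfolding S_def using n3
      by (intro image_eqI[where x="1"]) auto
    fix y assume "y \<in> S"
    then obtain k where k: "k \<in> {1..n-1}" "y = c1 + R * cos (real k * pi / real n)" unfolding S_def by auto
    have "cos (real k * pi / real n) \<le> cos (real 1 * pi / real n)" using k by (intro mono) auto
    hence "R * cos (real k * pi / real n) \<le> R * cos (pi / real n)" using R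
      by (intro mult_left_mono) auto
    thus "y \<le> c1 + R * cos (pi / real n)" using k by simp
  qed
  have ord: "order x f \<le> 2" for x
  proof (cases "poly f x = 0")
    case False thus ?thesis using order_root by (metis le0 nat_neq_iff not_less0)
  next
    case True
    have f0: "f \<noteq> 0" using pd0 by auto
    have "order x (pderiv f) \<le> 1" using simple_roots[OF pd0] cardR degpd by simp
    thus ?thesis using order_pderiv[OF f0 True] by simp
  qed
  show ?thesis using ord cardR SR MinS MaxS
    by (simp add: inradius_def c1_def algebra_simps)
qed


theorem theorem1:
  fixes n :: nat and A :: "nat \<Rightarrow> real \<times> real" and c :: "real \<times> real" and R a :: real
    and f :: "real poly"
  assumes "n \<ge> 3"
    and "regular_polygon n A c R"
    and "a \<noteq> 0"
    and "f = smult a (\<Prod>j=1..n. [:- fst (A j), 1:])"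
  shows "(\<forall>x. order x f \<le> 2)
       \<and> card {x. poly (pderiv f) x = 0} = n - 1
       \<and> Min {x. poly (pderiv f) x = 0} = fst c - inradius n R
       \<and> Max {x. poly (pderiv f) x = 0} = fst c + inradius n R"
  using main[OF assms] .

end
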